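(* Let $\alpha>0$ and let $Y,y\in\mathbb{R}$ satisfy $-Y\leq y\leq Y$. Define $g_{\alpha,Y}:\mathbb{R}\to\mathbb{R}$ by $$g_{\alpha,Y}(z)=\operatorname{sign}(z)\left(Y\sqrt{\alpha |z|+1}-Y\right),$$ that is, $g_{\alpha,Y}(z)=Y\sqrt{\alpha z+1}-Y$ for $z\geq 0$ and $g_{\alpha,Y}(z)=-Y\sqrt{-\alpha z+1}+Y$ for $z<0$. Then the function $z\mapsto l_y(g_{\alpha,Y}(z))=(g_{\alpha,Y}(z)-y)^2$ is convex on $\mathbb{R}$.
   Context: Here $l_y(\hat y)=(\hat y-y)^2$ denotes the square (L2) loss of a prediction $\hat y$ against the target $y$, and $\operatorname{sign}(z)$ is $1$ for $z>0$, $-1$ for $z<0$, and $0$ for $z=0$. *)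

theory Defs
  imports "HOL-Analysis.Analysis"
begin

definition sq_loss :: "real \<Rightarrow> real \<Rightarrow> real" where
  "sq_loss y yhat = (yhat - y)^2"

definition g_fun :: "real \<Rightarrow> real \<Rightarrow> real \<Rightarrow> real" where
  "g_fun \<alpha> Y z = sgn z * (Y * sqrt (\<alpha> * \<bar>z\<bar> + 1) - Y)"

end

theory Submission
  imports Defs
begin

lemma g_deriv:
  fixes \<alpha> Y :: real
  assumes a: "\<alpha> > 0"
  shows "(g_fun \<alpha> Y has_real_derivative Y * \<alpha> / (2 * sqrt (\<alpha> * \<bar>x\<bar> + 1))) (at x)"
proof (cases "x > 0")
  case True
  have p: "\<alpha> * x + 1 > 0" using mult_pos_pos[OF a True] by simp
  have "((\<lambda>z. Y * sqrt (\<alpha> * z + 1) - Y) has_real_derivative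
          Y * \<alpha> / (2 * sqrt (\<alpha> * \<bar>x\<bar> + 1))) (at x)"
    using True a by (auto intro!: derivative_eq_intros simp: field_simps) (use p in linarith)+
  then show ?thesis
    by (rule has_field_derivative_transform_within_open[where S="{0<..}"])
       (use True in \<open>auto simp: g_fun_def\<close>)
next
  case False
  show ?thesis
  proof (cases "x < 0")
    case True
    have p: "\<alpha> * x < 0" using mult_pos_neg[OF a True] by simp
    have "((\<lambda>z. - (Y * sqrt (- (\<alpha> * z) + 1) - Y)) has_real_derivative
          Y * \<alpha> / (2 * sqrt (\<alpha> * \<bar>x\<bar> + 1))) (at x)"
      using True a by (auto intro!: derivative_eq_intros simp: field_simps) (use p in linarith)+
    then show ?thesis
      by (rule has_field_derivative_transform_within_open[where S="{..<0}"])
         (use True in \<open>auto simp: g_fun_def\<close>)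
  next
    case False
    with \<open>\<not> x > 0\<close> have x0: "x = 0" by simp
    define k where "k z = Y * \<alpha> / (sqrt (\<alpha> * \<bar>z\<bar> + 1) + 1)" for z
    have eq: "g_fun \<alpha> Y z - g_fun \<alpha> Y 0 = k z * (z - 0)" for z
    proof -
      have s: "sqrt (\<alpha> * \<bar>z\<bar> + 1) ^ 2 = \<alpha> * \<bar>z\<bar> + 1"
        using a by simp
      have pos: "sqrt (\<alpha> * \<bar>z\<bar> + 1) + 1 > 0"
        by (smt (verit) real_sqrt_ge_zero a abs_ge_zero mult_nonneg_nonneg)
      have "(sqrt (\<alpha> * \<bar>z\<bar> + 1) - 1) * (sqrt (\<alpha> * \<bar>z\<bar> + 1) + 1) = \<alpha> * \<bar>z\<bar>"
        using s by (simp add: algebra_simps power2_eq_square)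
      then have "sqrt (\<alpha> * \<bar>z\<bar> + 1) - 1 = \<alpha> * \<bar>z\<bar> / (sqrt (\<alpha> * \<bar>z\<bar> + 1) + 1)"
        using pos by (simp add: field_simps)
      then have e1: "Y * sqrt (\<alpha> * \<bar>z\<bar> + 1) - Y = Y * (\<alpha> * \<bar>z\<bar> / (sqrt (\<alpha> * \<bar>z\<bar> + 1) + 1))"
        by (metis right_diff_distrib mult_1_right)
      have e2: "Y * sqrt (\<alpha> * \<bar>u\<bar> + 1) - Y = Y * (\<alpha> * \<bar>u\<bar> / (sqrt (\<alpha> * \<bar>u\<bar> + 1) + 1))" if "u = z \<or> u = 0" for u
        using that e1 by auto
      show ?thesis
        unfolding g_fun_def k_def e2[OF disjI1[OF refl]] e2[OF disjI2[OF refl]]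
        by (cases "z > 0"; cases "z < 0") (auto simp: sgn_if)
    qed
    have "isCont k 0"
      unfolding k_def
      by (intro continuous_intros) (use a in \<open>auto intro!: add_pos_nonneg\<close>)
    moreover have "k 0 = Y * \<alpha> / (2 * sqrt (\<alpha> * \<bar>0\<bar> + 1))"
      by (simp add: k_def)
    ultimately show ?thesis
      unfolding x0 CARAT_DERIV using eq by blast
  qed
qed

theorem mainTheorem1:
  fixes \<alpha> Y y :: real
  assumes "\<alpha> > 0" and "-Y \<le> y" and "y \<le> Y"
  shows "convex_on UNIV (\<lambda>z. sq_loss y (g_fun \<alpha> Y z))"
proof -
  define s where "s x = sqrt (\<alpha> * \<bar>x\<bar> + 1)" for x
  define h where "h x = (g_fun \<alpha> Y x - y) / s x" for x
  have s0: "s 0 = 1" by (simp add: s_def)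
  have s1: "s x \<ge> 1" for x
    unfolding s_def using assms(1) by simp
  have smono1: "s x \<le> s z" if "0 \<le> x" "x \<le> z" for x z
    unfolding s_def using that assms(1) by (simp add: mult_left_mono)
  have smono2: "s z \<le> s x" if "z < 0" "x \<le> z" for x z
    unfolding s_def using that assms(1) by (simp add: mult_left_mono)
  have Y0: "Y \<ge> 0" using assms by simp
  have hpos: "h x = Y - (Y + y) / s x" if "x \<ge> 0" for x
    using s1[of x] s0 that unfolding h_def g_fun_def s_def[symmetric]
    by (cases "x = 0") (auto simp: field_simps sgn_if)
  have hneg: "h x = - Y + (Y - y) / s x" if "x < 0" for x
    using s1[of x] that unfolding h_def g_fun_def s_def[symmetric]
    by (auto simp: field_simps sgn_if)
  have hmono: "h x \<le> h z" if "x \<le> z" for x z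
  proof (cases "x \<ge> 0")
    case True
    have "(Y + y) / s z \<le> (Y + y) / s x"
      using s1[of x] smono1[OF True that] assms
      by (intro divide_left_mono) (auto intro: mult_pos_pos)
    then show ?thesis using True that hpos by simp
  next
    case False
    show ?thesis
    proof (cases "z < 0")
      case True
      have "(Y - y) / s x \<le> (Y - y) / s z"
        using s1[of z] smono2[OF True that] assms
        by (intro divide_left_mono) (auto intro: mult_pos_pos)
      then show ?thesis using True False hneg by simp
    next
      case False2: False
      have "(Y - y) / s x \<le> Y - y"
        using s1[of x] assms mult_nonneg_nonneg[of "Y - y" "s x - 1"]
        by (simp add: divide_le_eq_1 field_simps mult_left_mono algebra_simps)
      moreover have "(Y + y) / s z \<le> Y + y"
        using s1[of z] assms mult_nonneg_nonneg[of "Y + y" "s z - 1"]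
        by (simp add: divide_le_eq_1 field_simps mult_left_mono algebra_simps)
      ultimately show ?thesis using False False2 hneg hpos by simp
    qed
  qed
  show ?thesis
  proof (rule convex_on_realI[where f' = "\<lambda>x. Y * \<alpha> * h x"])
    show "connected (UNIV :: real set)" by simp
  next
    fix x :: real
    have "((\<lambda>z. (g_fun \<alpha> Y z - y) ^ 2) has_real_derivative
       of_nat 2 * ((Y * \<alpha> / (2 * sqrt (\<alpha> * \<bar>x\<bar> + 1)) - 0) * (g_fun \<alpha> Y x - y) ^ (2 - Suc 0))) (at x)"
      by (rule DERIV_power[OF DERIV_diff[OF g_deriv[OF assms(1)] DERIV_const]])
    moreover have "of_nat 2 * ((Y * \<alpha> / (2 * sqrt (\<alpha> * \<bar>x\<bar> + 1)) - 0) * (g_fun \<alpha> Y x - y) ^ (2 - Suc 0))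
       = Y * \<alpha> * h x"
      unfolding h_def s_def by simp
    ultimately show "((\<lambda>z. sq_loss y (g_fun \<alpha> Y z)) has_real_derivative Y * \<alpha> * h x) (at x)"
      unfolding sq_loss_def by simp
  next
    fix x z :: real
    assume "x \<le> z"
    then show "Y * \<alpha> * h x \<le> Y * \<alpha> * h z"
      using hmono Y0 assms(1) by (intro mult_left_mono) auto
  qed
qed

end
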